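(* Let $\varphi:[0,\infty)\to\mathbb R$ be completely monotone with $\varphi(0)=1$ and $\lim_{x\to\infty}\varphi(x)=0$, and let $0<p\le1$, $D\ge1$. Then the function $\rho:\mathbb R^D\to\mathbb R$, $\rho(\boldsymbol\omega)=\varphi(\|\boldsymbol\omega\|_p^p)$, is positive definite: for every $k\ge1$, every pairwise distinct $\theta_1,\dots,\theta_k\in\mathbb R^D$ and every $\mathbf c\in\mathbb C^k\setminus\{0\}$, $\sum_{\ell,\ell'=1}^k\overline{\mathbf c[\ell]}\,\mathbf c[\ell']\,\varphi(\|\theta_{\ell'}-\theta_\ell\|_p^p)>0$.
   Context: A function $\varphi:[0,\infty)\to\mathbb R$ is completely monotone (CMF) if it is infinitely differentiable on $(0,\infty)$, right-continuous at $0$, and $(-1)^n\varphi^{(n)}(x)\ge0$ for all $x>0$ and all integers $n\ge0$. $\|\theta\|_p^p=\sum_{d=1}^D|\theta[d]|^p$. *)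

theory Defs
  imports "HOL-Analysis.Analysis" "HOL-Library.Complex_Order"
begin

text \<open>Completely monotone function on [0,\<infinity>): smooth on (0,\<infinity>) (all iterated
  derivatives exist there), right-continuous at 0, and (-1)^n phi^(n)(x) \<ge> 0 for x > 0.
  Values of phi on negative reals are irrelevant.\<close>
definition completely_monotone :: "(real \<Rightarrow> real) \<Rightarrow> bool" where
  "completely_monotone \<phi> \<longleftrightarrow>
     (\<forall>n::nat. \<forall>x>0. ((deriv ^^ n) \<phi>) differentiable (at x)) \<and>
     (\<phi> \<longlongrightarrow> \<phi> 0) (at_right 0) \<and>
     (\<forall>n::nat. \<forall>x>0. (-1) ^ n * (deriv ^^ n) \<phi> x \<ge> 0)"

definition pnorm_pow :: "real \<Rightarrow> real ^ 'n \<Rightarrow> real" where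
  "pnorm_pow p x = (\<Sum>d\<in>UNIV. \<bar>x $ d\<bar> powr p)"

end

theory Submission
  imports Defs
begin


definition psi :: "(real \<Rightarrow> real) \<Rightarrow> nat \<Rightarrow> real \<Rightarrow> real" where
  "psi \<phi> n x = (-1)^n * (deriv ^^ n) \<phi> x"

lemma cm_deriv:
  assumes "completely_monotone \<phi>" "x > 0"
  shows "((deriv ^^ n) \<phi> has_real_derivative (deriv ^^ Suc n) \<phi> x) (at x)"
proof -
  have "(deriv ^^ n) \<phi> differentiable (at x)" using assms unfolding completely_monotone_def by blast
  then show ?thesis by (simp add: DERIV_deriv_iff_real_differentiable)
qed

lemma cm_psi_nonneg:
  assumes "completely_monotone \<phi>" "x > 0"
  shows "psi \<phi> n x \<ge> 0"
  using assms unfolding completely_monotone_def psi_def by blast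

lemma psi_deriv:
  assumes "completely_monotone \<phi>" "A - t > 0"
  shows "((\<lambda>t. psi \<phi> m (A - t)) has_real_derivative psi \<phi> (Suc m) (A - t)) (at t within S)"
proof -
  have d: "((deriv ^^ m) \<phi> has_real_derivative (deriv ^^ Suc m) \<phi> (A - t)) (at (A - t))"
    using cm_deriv[OF assms] .
  have "((\<lambda>t. (deriv ^^ m) \<phi> (A - t)) has_real_derivative (deriv ^^ Suc m) \<phi> (A - t) * (-1)) (at t)"
  proof -
    have g: "((\<lambda>t. A - t) has_real_derivative -1) (at t)" by (auto intro!: derivative_eq_intros)
    show ?thesis using DERIV_chain2[OF d g] by simp
  qed
  then have "((\<lambda>t. (-1)^m * (deriv ^^ m) \<phi> (A - t)) has_real_derivative (-1)^m * ((deriv ^^ Suc m) \<phi> (A - t) * (-1))) (at t)"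
    by (rule DERIV_cmult)
  then show ?thesis unfolding psi_def
    by (auto intro: has_field_derivative_at_within simp: algebra_simps)
qed

definition Tp :: "(real \<Rightarrow> real) \<Rightarrow> real \<Rightarrow> nat \<Rightarrow> real \<Rightarrow> real" where
  "Tp \<phi> A n x = (\<Sum>i<n. (A - x)^i / fact i * psi \<phi> i A)"

definition Rint :: "(real \<Rightarrow> real) \<Rightarrow> real \<Rightarrow> nat \<Rightarrow> real \<Rightarrow> real \<Rightarrow> real" where
  "Rint \<phi> A n x t = (A - x - t)^(n-1) / fact (n-1) * psi \<phi> n (A - t)"

lemma taylor_repr:
  assumes cm: "completely_monotone \<phi>" and "0 < x" "x < A" "n > 0"
  shows "\<phi> x = Tp \<phi> A n x + integral {0..A-x} (Rint \<phi> A n x)"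
    and "Rint \<phi> A n x integrable_on {0..A-x}"
proof -
  have Df: "\<And>m t. m < n \<Longrightarrow> 0 \<le> t \<Longrightarrow> t \<le> A - x \<Longrightarrow>
    ((\<lambda>t. psi \<phi> m (A - t)) has_vector_derivative psi \<phi> (Suc m) (A - t)) (at t within {0..A-x})"
    using psi_deriv[OF cm] assms by (simp add: has_real_derivative_iff_has_vector_derivative[symmetric])
  have f0: "(\<lambda>m. \<lambda>t. psi \<phi> m (A - t)) 0 = (\<lambda>t. \<phi> (A - t))" by (simp add: psi_def)
  note T = Taylor_integral[of n "\<lambda>m t. psi \<phi> m (A - t)" "\<lambda>t. \<phi> (A - t)" 0 "A - x", OF \<open>n>0\<close> f0 Df]
    Taylor_integrable[of n "\<lambda>m t. psi \<phi> m (A - t)" "\<lambda>t. \<phi> (A - t)" 0 "A - x", OF \<open>n>0\<close> f0 Df]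
  have eq: "(\<lambda>t. ((A - x - t) ^ (n - 1) / fact (n - 1)) *\<^sub>R psi \<phi> n (A - t)) = Rint \<phi> A n x"
    by (auto simp: Rint_def)
  show "\<phi> x = Tp \<phi> A n x + integral {0..A-x} (Rint \<phi> A n x)"
    using T(1) assms unfolding eq by (simp add: Tp_def)
  show "Rint \<phi> A n x integrable_on {0..A-x}"
    using T(2) assms unfolding eq by simp
qed



lemma Rint_nonneg:
  assumes cm: "completely_monotone \<phi>" and "t \<le> A - x" "0 \<le> t" "0 < x"
  shows "Rint \<phi> A n x t \<ge> 0"
  unfolding Rint_def using assms cm_psi_nonneg[OF cm, of "A - t" n] by auto

lemma Tp_nonneg:
  assumes cm: "completely_monotone \<phi>" and "x \<le> A" "0 < A"
  shows "Tp \<phi> A n x \<ge> 0"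
  unfolding Tp_def using assms cm_psi_nonneg[OF cm, of A] by (auto intro!: sum_nonneg)

lemma rem_nonneg:
  assumes cm: "completely_monotone \<phi>" and "0 < x" "x < A" "n > 0"
  shows "\<phi> x - Tp \<phi> A n x \<ge> 0"
proof -
  have "0 \<le> integral {0..A-x} (Rint \<phi> A n x)"
    by (rule integral_nonneg[OF taylor_repr(2)[OF assms]]) (use Rint_nonneg[OF cm] assms in auto)
  then show ?thesis using taylor_repr(1)[OF assms] by simp
qed

lemma rem_le_phi:
  assumes cm: "completely_monotone \<phi>" and "0 < x" "x < A"
  shows "\<phi> x - Tp \<phi> A n x \<le> \<phi> x"
  using Tp_nonneg[OF cm, of x A n] assms by auto

lemma rem_compare:
  assumes cm: "completely_monotone \<phi>" and "0 < y" "y < x" "x < A" "n > 0"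
  shows "\<phi> x - Tp \<phi> A n x \<le> ((A - x) / (A - y))^(n-1) * (\<phi> y - Tp \<phi> A n y)"
proof -
  define r where "r = ((A - x) / (A - y))^(n-1)"
  have r0: "r \<ge> 0" using assms by (simp add: r_def)
  have Ix: "\<phi> x - Tp \<phi> A n x = integral {0..A-x} (Rint \<phi> A n x)"
    using taylor_repr(1)[OF cm, of x A n] assms by simp
  have Iy: "\<phi> y - Tp \<phi> A n y = integral {0..A-y} (Rint \<phi> A n y)"
    using taylor_repr(1)[OF cm, of y A n] assms by simp
  have inty: "Rint \<phi> A n y integrable_on {0..A-y}"
    using taylor_repr(2)[OF cm, of y A n] assms by simp
  have intx: "Rint \<phi> A n x integrable_on {0..A-x}"
    using taylor_repr(2)[OF cm, of x A n] assms by simp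
  have inty': "Rint \<phi> A n y integrable_on {0..A-x}"
    by (rule integrable_on_subinterval[OF inty]) (use assms in auto)
  have pt: "Rint \<phi> A n x t \<le> r * Rint \<phi> A n y t" if t: "t \<in> {0..A-x}" for t
  proof -
    have p: "psi \<phi> n (A - t) \<ge> 0" using cm_psi_nonneg[OF cm, of "A - t" n] t assms by auto
    have "A - x - t \<le> (A - x) / (A - y) * (A - y - t)"
    proof -
      have "t * (A - x) \<le> t * (A - y)" using t assms by (intro mult_left_mono) auto
      then have "(A - x - t) * (A - y) \<le> (A - x) * (A - y - t)" by (simp add: algebra_simps)
      then show ?thesis using assms by (simp add: field_simps)
    qed
    then have "(A - x - t)^(n-1) \<le> ((A - x) / (A - y) * (A - y - t))^(n-1)"
      using t by (intro power_mono) auto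
    also have "\<dots> = r * (A - y - t)^(n-1)" unfolding r_def by (rule power_mult_distrib)
    finally have "(A - x - t)^(n-1) \<le> r * (A - y - t)^(n-1)" .
    then have "(A - x - t)^(n-1) / fact (n-1) * psi \<phi> n (A - t) \<le> r * (A - y - t)^(n-1) / fact (n-1) * psi \<phi> n (A - t)"
      using p by (intro mult_right_mono divide_right_mono) auto
    then show ?thesis by (simp add: Rint_def)
  qed
  have "integral {0..A-x} (Rint \<phi> A n x) \<le> integral {0..A-x} (\<lambda>t. r * Rint \<phi> A n y t)"
    by (rule integral_le[OF intx integrable_cmul[OF inty', of r, simplified] pt])
  also have "\<dots> = r * integral {0..A-x} (Rint \<phi> A n y)" by simp
  also have "integral {0..A-x} (Rint \<phi> A n y) \<le> integral {0..A-y} (Rint \<phi> A n y)"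
    by (rule integral_subset_le) (use assms inty' inty Rint_nonneg[OF cm] in auto)
  then have "r * integral {0..A-x} (Rint \<phi> A n y) \<le> r * integral {0..A-y} (Rint \<phi> A n y)"
    using r0 by (simp add: mult_left_mono)
  finally show ?thesis using Ix Iy r_def by simp
qed

lemma rem_small:
  assumes cm: "completely_monotone \<phi>" and "0 < x" "x < A" "e > 0"
  shows "\<forall>\<^sub>F n in sequentially. \<phi> x - Tp \<phi> A n x \<le> e"
proof -
  define r where "r = (A - x) / (A - x/2)"
  have r: "0 \<le> r" "r < 1" using assms by (auto simp: r_def field_simps)
  have lim: "(\<lambda>n. r^n * \<phi> (x/2)) \<longlonglongrightarrow> 0 * \<phi> (x/2)"
    by (intro tendsto_mult tendsto_const LIMSEQ_power_zero) (use r in auto)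
  then have "\<forall>\<^sub>F n in sequentially. r^n * \<phi> (x/2) < e" using assms
    by (simp add: order_tendstoD(2))
  then obtain N where N: "\<And>n. n \<ge> N \<Longrightarrow> r^n * \<phi> (x/2) < e" by (auto simp: eventually_sequentially)
  have ev: "\<forall>\<^sub>F n in sequentially. r^(n - 1) * \<phi> (x/2) < e"
    unfolding eventually_sequentially by (rule exI[of _ "Suc N"]) (auto intro!: N)
  show ?thesis
    using eventually_conj[OF ev eventually_gt_at_top[of 0]]
  proof (rule eventually_mono)
    fix n assume n: "r^(n - 1) * \<phi> (x/2) < e \<and> 0 < n"
    have "\<phi> x - Tp \<phi> A n x \<le> r^(n-1) * (\<phi> (x/2) - Tp \<phi> A n (x/2))"
      using rem_compare[OF cm, of "x/2" x A n] assms n by (simp add: r_def)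
    also have "\<dots> \<le> r^(n-1) * \<phi> (x/2)"
      using rem_le_phi[OF cm, of "x/2" A n] assms r by (intro mult_left_mono) auto
    finally show "\<phi> x - Tp \<phi> A n x \<le> e" using n by simp
  qed
qed



lemma kernel_approx:
  fixes y :: real
  assumes "0 \<le> y" "y \<le> 1"
  shows "(1 - y)^k \<le> exp (- (real k * y))" and "exp (- (real k * y)) - (1 - y)^k \<le> y"
proof -
  define b where "b = 1 - y"
  define c where "c = exp (- y)"
  have bc: "0 \<le> b" "b \<le> c" "c \<le> 1" "0 \<le> c"
    using assms exp_ge_add_one_self[of "-y"] by (auto simp: b_def c_def)
  have ck: "exp (- (real k * y)) = c^k" by (simp add: c_def exp_of_nat_mult[symmetric])
  show "(1 - y)^k \<le> exp (- (real k * y))" unfolding ck b_def[symmetric] using bc by (intro power_mono) auto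
  have diff: "c^k - b^k \<le> real k * (c - b) * c^(k-1)"
  proof -
    have "c^k - b^k = (c - b) * (\<Sum>i<k. b^(k - Suc i) * c^i)" by (rule power_diff_sumr2)
    also have "(\<Sum>i<k. b^(k - Suc i) * c^i) \<le> (\<Sum>i<k. c^(k-1))"
    proof (rule sum_mono)
      fix i assume i: "i \<in> {..<k}"
      have "b^(k - Suc i) * c^i \<le> c^(k - Suc i) * c^i" using bc by (intro mult_right_mono power_mono) auto
      also have "\<dots> = c^(k-1)" using i by (simp add: power_add[symmetric])
      finally show "b^(k - Suc i) * c^i \<le> c^(k-1)" .
    qed
    then have "(c - b) * (\<Sum>i<k. b^(k - Suc i) * c^i) \<le> (c - b) * (\<Sum>i<k. c^(k-1))"
      using bc by (intro mult_left_mono) auto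
    finally show ?thesis by (simp add: algebra_simps)
  qed
  have cb: "c - b \<le> y^2"
  proof -
    have "1 + y \<le> exp y" by (rule exp_ge_add_one_self)
    then have "c \<le> 1 / (1 + y)" using assms by (simp add: c_def exp_minus field_simps)
    also have "\<dots> \<le> 1 - y + y^2" using assms by (simp add: field_simps power2_eq_square)
    finally show ?thesis by (simp add: b_def)
  qed
  have key: "real k * y * c^(k-1) \<le> 1"
  proof (cases k)
    case 0 then show ?thesis by simp
  next
    case (Suc j)
    have "real k * y \<le> exp (real k * y - 1)" using exp_ge_add_one_self[of "real k * y - 1"] by simp
    also have "\<dots> \<le> exp (real j * y)" using assms Suc by (simp add: algebra_simps)
    finally have "real k * y \<le> exp (real j * y)" .
    moreover have "c^(k-1) = exp (- (real j * y))" using Suc by (simp add: c_def exp_of_nat_mult[symmetric])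
    ultimately have "real k * y * c^(k-1) \<le> exp (real j * y) * exp (- (real j * y))"
      by (metis \<open>real k * y \<le> exp (real j * y)\<close> \<open>c^(k-1) = exp (- (real j * y))\<close> exp_ge_zero mult_right_mono)
    then show ?thesis by (simp add: exp_minus)
  qed
  have "c^k - b^k \<le> real k * y^2 * c^(k-1)"
    using diff cb bc by (smt (verit) mult_left_mono mult_right_mono of_nat_0_le_iff zero_le_power)
  also have "\<dots> = y * (real k * y * c^(k-1))" by (simp add: power2_eq_square)
  also have "\<dots> \<le> y * 1" using key assms by (intro mult_left_mono) auto
  finally show "exp (- (real k * y)) - (1 - y)^k \<le> y" by (simp add: ck b_def)
qed



lemma Tp_alt:
  assumes "A > 0"
  shows "Tp \<phi> A n x = (\<Sum>i<n. (A^i / fact i * psi \<phi> i A) * (1 - x/A)^i)"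
  unfolding Tp_def
proof (rule sum.cong[OF refl])
  fix i
  have "(A - x)^i = A^i * (1 - x/A)^i" using assms by (simp add: power_mult_distrib[symmetric] field_simps)
  then show "(A - x) ^ i / fact i * psi \<phi> i A = A ^ i / fact i * psi \<phi> i A * (1 - x / A) ^ i" by simp
qed

lemma arith_helper: "(m::real) \<le> Mid + X + 2 * (m - E2) \<Longrightarrow> 19/20 - 1/40 \<le> E2 \<Longrightarrow> X \<le> 3 * (1/20+1/40) \<Longrightarrow> m \<le> 1 \<Longrightarrow> 1/2 \<le> Mid"
  by argo

lemma transfer:
  fixes \<phi> :: "real \<Rightarrow> real" and W u :: "'j \<Rightarrow> real"
  assumes cm: "completely_monotone \<phi>" and phi0: "\<phi> 0 = 1" and lim: "(\<phi> \<longlongrightarrow> 0) at_top"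
    and fin: "finite J" and u0: "\<forall>j\<in>J. u j \<ge> 0"
    and pos: "\<forall>s>0. (\<Sum>j\<in>J. W j * exp (- s * u j)) > 0"
  shows "(\<Sum>j\<in>J. W j * \<phi> (u j)) > 0"
proof -
  define g where "g s = (\<Sum>j\<in>J. W j * exp (- s * u j))" for s
  have gcont: "continuous_on UNIV g" unfolding g_def by (intro continuous_intros)
  have g0: "g s \<ge> 0" if "s \<ge> 0" for s
  proof (cases "s > 0")
    case True then show ?thesis using pos by (simp add: g_def less_imp_le)
  next
    case False
    then have s: "s = 0" using that by simp
    have "(g \<longlongrightarrow> g 0) (at_right 0)"
      using gcont by (simp add: continuous_on_def filterlim_at_split)
    moreover have "\<forall>\<^sub>F t in at_right 0. g t \<ge> 0"
      unfolding eventually_at_right_field using pos by (auto simp: g_def intro!: exI[of _ 1] less_imp_le)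
    ultimately show ?thesis using s by (simp add: tendsto_lowerbound)
  qed
  define M where "M = (\<Sum>j\<in>J. \<bar>W j\<bar>)"
  have M0: "M \<ge> 0" unfolding M_def by (simp add: sum_nonneg)
  have rc: "(\<phi> \<longlongrightarrow> 1) (at_right 0)" using cm phi0 unfolding completely_monotone_def by simp
  obtain x1 where x1: "x1 > 0" "\<phi> x1 \<le> 1/20"
  proof -
    have "\<forall>\<^sub>F x in at_top. \<phi> x < 1/20" using order_tendstoD(2)[OF lim, of "1/20"] by simp
    then obtain N where "\<And>x. x \<ge> N \<Longrightarrow> \<phi> x < 1/20" by (auto simp: eventually_at_top_linorder)
    then have "\<phi> (max N 1) < 1/20" by simp
    then show ?thesis using that[of "max N 1"] by simp
  qed
  obtain x2 where x2: "x2 > 0" "\<phi> x2 \<ge> 19/20"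
  proof -
    have "\<forall>\<^sub>F x in at_right 0. \<phi> x > 19/20" using order_tendstoD(1)[OF rc, of "19/20"] by simp
    then obtain b where "b > 0" "\<And>y. y > 0 \<Longrightarrow> y < b \<Longrightarrow> \<phi> y > 19/20" by (auto simp: eventually_at_right_field)
    then have "\<phi> (b/2) > 19/20" "b/2 > 0" by auto
    then show ?thesis using that[of "b/2"] by simp
  qed
  define \<epsilon> where "\<epsilon> = 1 / x1"
  define S where "S = 1 / x2"
  have \<epsilon>0: "\<epsilon> > 0" using x1 by (simp add: \<epsilon>_def)
  obtain \<delta> where \<delta>: "\<delta> > 0" "\<And>s. s \<in> {\<epsilon>..S} \<Longrightarrow> g s \<ge> \<delta>"
  proof (cases "{\<epsilon>..S} = {}")
    case True then show ?thesis using that[of 1] by auto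
  next
    case False
    obtain s0 where s0: "s0 \<in> {\<epsilon>..S}" "\<And>s. s \<in> {\<epsilon>..S} \<Longrightarrow> g s0 \<le> g s"
      using continuous_attains_inf[OF compact_Icc False continuous_on_subset[OF gcont]] by auto
    have "g s0 > 0" using pos s0(1) \<epsilon>0 by (auto simp: g_def)
    then show ?thesis using that[of "g s0"] s0 by auto
  qed
  define \<eta> where "\<eta> = \<delta> / (8 * (M + 1))"
  have \<eta>0: "\<eta> > 0" using \<delta> M0 by (simp add: \<eta>_def)
  have M\<eta>: "2 * \<eta> * M \<le> \<delta> / 4"
    using \<delta> M0 by (simp add: \<eta>_def field_simps)
  obtain x0 where x0: "x0 > 0" "\<phi> x0 \<ge> 1 - \<eta>"
  proof -
    have "\<forall>\<^sub>F x in at_right 0. \<phi> x > 1 - \<eta>" using order_tendstoD(1)[OF rc, of "1 - \<eta>"] \<eta>0 by simp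
    then obtain b where "b > 0" "\<And>y. y > 0 \<Longrightarrow> y < b \<Longrightarrow> \<phi> y > 1 - \<eta>" by (auto simp: eventually_at_right_field)
    then have "\<phi> (b/2) > 1 - \<eta>" "b/2 > 0" by auto
    then show ?thesis using that[of "b/2"] by simp
  qed
  define P where "P = {x0, x1, x2} \<union> (u ` J - {0})"
  have finP: "finite P" using fin by (simp add: P_def)
  have P0: "\<forall>x\<in>P. x > 0" using x0 x1 x2 u0 by (force simp: P_def)
  define U where "U = Max (insert 1 P)"
  have U1: "U \<ge> 1" using finP by (simp add: U_def)
  have UP: "\<forall>x\<in>P. x \<le> U" using finP by (simp add: U_def)
  define A where "A = U * (40 + 1/\<eta>)"
  have A0: "A > 0" unfolding A_def using U1 \<eta>0 by (intro mult_pos_pos add_pos_pos) auto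
  have UA: "U / A \<le> \<eta>" "U / A \<le> 1/40" "U < A"
  proof -
    have "40 + 1/\<eta> > 0" using \<eta>0 by (simp add: add_pos_pos)
    then have eq: "U / A = 1 / (40 + 1/\<eta>)" using U1 by (simp add: A_def)
    show "U / A \<le> \<eta>" unfolding eq using \<eta>0 by (simp add: field_simps)
    show "U / A \<le> 1/40" unfolding eq using \<eta>0 by (simp add: field_simps)
    have "U / \<eta> > 0" using U1 \<eta>0 by simp
    moreover have "A = U * 40 + U * (1/\<eta>)" by (simp add: A_def distrib_left)
    ultimately show "U < A" using U1 by simp
  qed
  have PA: "\<forall>x\<in>P. 0 < x \<and> x < A \<and> x / A \<le> U / A"
    using P0 UP UA(3) A0 by (auto simp: divide_right_mono)
  define \<eta>' where "\<eta>' = min \<eta> (1/40)"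
  have \<eta>'0: "\<eta>' > 0" using \<eta>0 by (simp add: \<eta>'_def)
  have "\<forall>\<^sub>F n in sequentially. (\<forall>x\<in>P. \<phi> x - Tp \<phi> A n x \<le> \<eta>')"
    by (rule eventually_ball_finite[OF finP]) (use rem_small[OF cm _ _ \<eta>'0] PA in blast)
  then have "\<forall>\<^sub>F n in sequentially. n > 0 \<and> (\<forall>x\<in>P. \<phi> x - Tp \<phi> A n x \<le> \<eta>')"
    using eventually_gt_at_top[of 0] by (auto intro: eventually_conj)
  then obtain n where n: "n > 0" "\<And>x. x \<in> P \<Longrightarrow> \<phi> x - Tp \<phi> A n x \<le> \<eta>'"
    by (auto simp: eventually_sequentially)
  define c where "c i = A^i / fact i * psi \<phi> i A" for i
  have c0: "c i \<ge> 0" for i unfolding c_def using cm_psi_nonneg[OF cm A0] A0 by simp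
  define m where "m = (\<Sum>i<n. c i)"
  have T: "Tp \<phi> A n x = (\<Sum>i<n. c i * (1 - x/A)^i)" for x unfolding c_def by (rule Tp_alt[OF A0])
  have Tle: "Tp \<phi> A n x \<le> \<phi> x" if "0 < x" "x < A" for x using rem_nonneg[OF cm that n(1)] by simp
  have Tge: "Tp \<phi> A n x \<ge> \<phi> x - \<eta>'" if "x \<in> P" for x using n(2)[OF that] by simp
  have m1: "m \<le> 1"
  proof -
    have "((\<lambda>x. \<Sum>i<n. c i * (1 - x/A)^i) \<longlongrightarrow> (\<Sum>i<n. c i * (1 - 0/A)^i)) (at_right 0)"
      using A0 by (intro tendsto_intros) auto
    then have l: "((\<lambda>x. Tp \<phi> A n x) \<longlongrightarrow> m) (at_right 0)" by (simp add: T m_def)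
    have "\<forall>\<^sub>F x in at_right 0. Tp \<phi> A n x \<le> \<phi> x"
      unfolding eventually_at_right_field using Tle A0 by (auto intro!: exI[of _ A])
    from tendsto_le[OF _ rc l this] show ?thesis by simp
  qed
  have mT: "Tp \<phi> A n x \<le> m" if "0 \<le> x" "x \<le> A" for x
    unfolding T m_def using that A0 c0
    by (intro sum_mono mult_left_le power_le_one) (auto simp: field_simps)
  define E where "E x = (\<Sum>i<n. c i * exp (- (real i / A * x)))" for x
  have E0: "E 0 = m" by (simp add: E_def m_def)
  have ET: "0 \<le> E x - Tp \<phi> A n x \<and> E x - Tp \<phi> A n x \<le> x / A" if "0 \<le> x" "x \<le> A" for x
  proof -
    have y: "0 \<le> x / A" "x / A \<le> 1" using that A0 by auto
    have eq: "real i / A * x = real i * (x / A)" for i by simp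
    have "E x - Tp \<phi> A n x = (\<Sum>i<n. c i * (exp (- (real i * (x/A))) - (1 - x/A)^i))"
      by (simp add: E_def T eq sum_subtractf algebra_simps)
    moreover have "(\<Sum>i<n. c i * (exp (- (real i * (x/A))) - (1 - x/A)^i)) \<ge> 0"
      using kernel_approx(1)[OF y] c0 by (intro sum_nonneg mult_nonneg_nonneg) auto
    moreover have "(\<Sum>i<n. c i * (exp (- (real i * (x/A))) - (1 - x/A)^i)) \<le> (\<Sum>i<n. c i * (x/A))"
      using kernel_approx(2)[OF y] c0 by (intro sum_mono mult_left_mono) auto
    moreover have "(\<Sum>i<n. c i * (x/A)) = m * (x / A)" unfolding m_def by (rule sum_distrib_right[symmetric])
    moreover have "m * (x / A) \<le> x / A" using mult_right_mono[OF m1 y(1)] by simp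
    ultimately show ?thesis by linarith
  qed
  define G where "G = (\<Sum>i<n. c i * g (real i / A))"
  have GE: "G = (\<Sum>j\<in>J. W j * E (u j))"
    unfolding G_def g_def E_def
    by (simp add: sum_distrib_left sum_distrib_right mult_ac sum.swap[of _ J])
  have err: "\<bar>\<phi> (u j) - E (u j)\<bar> \<le> 2 * \<eta>" if j: "j \<in> J" for j
  proof (cases "u j = 0")
    case True
    have "x0 \<in> P" by (simp add: P_def)
    then have "m \<ge> \<phi> x0 - \<eta>'" using Tge mT[of x0] PA by fastforce
    then have "m \<ge> 1 - 2 * \<eta>" using x0 by (simp add: \<eta>'_def)
    then show ?thesis using True phi0 E0 m1 \<eta>0 by simp
  next
    case False
    then have uP: "u j \<in> P" using j by (simp add: P_def)
    have "\<phi> (u j) - Tp \<phi> A n (u j) \<le> \<eta>" using Tge[OF uP] by (simp add: \<eta>'_def)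
    moreover have "\<phi> (u j) - Tp \<phi> A n (u j) \<ge> 0" using Tle PA uP by fastforce
    moreover have "0 \<le> E (u j) - Tp \<phi> A n (u j)" "E (u j) - Tp \<phi> A n (u j) \<le> u j / A"
      using ET[of "u j"] PA uP by auto
    moreover have "u j / A \<le> \<eta>" using PA uP UA by fastforce
    ultimately show ?thesis by linarith
  qed
  have LG: "(\<Sum>j\<in>J. W j * \<phi> (u j)) \<ge> G - \<delta> / 4"
  proof -
    have "\<bar>(\<Sum>j\<in>J. W j * \<phi> (u j)) - G\<bar> = \<bar>\<Sum>j\<in>J. W j * (\<phi> (u j) - E (u j))\<bar>"
      by (simp add: GE sum_subtractf algebra_simps)
    also have "\<dots> \<le> (\<Sum>j\<in>J. \<bar>W j\<bar> * (2 * \<eta>))"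
      using err by (auto intro!: order_trans[OF sum_abs] sum_mono simp: abs_mult mult_left_mono)
    also have "\<dots> = 2 * \<eta> * M" by (simp add: M_def sum_distrib_left[symmetric] sum_distrib_right[symmetric] mult_ac)
    finally show ?thesis using M\<eta> by linarith
  qed
  define mid where "mid i = (if \<epsilon> \<le> real i / A \<and> real i / A \<le> S then 1 else 0 :: real)" for i
  define Mid where "Mid = (\<Sum>i<n. c i * mid i)"
  have Gmid: "G \<ge> \<delta> * Mid"
    unfolding G_def Mid_def sum_distrib_left
  proof (rule sum_mono)
    fix i
    show "\<delta> * (c i * mid i) \<le> c i * g (real i / A)"
    proof (cases "\<epsilon> \<le> real i / A \<and> real i / A \<le> S")
      case True then show ?thesis using \<delta>(2)[of "real i / A"] c0[of i] by (simp add: mid_def) (metis mult.commute mult_left_mono)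
    next
      case False then show ?thesis using g0[of "real i / A"] c0[of i] A0 by (auto simp: mid_def)
    qed
  qed
  have e3: "exp (1::real) \<le> 3" using exp_le by simp
  have perI: "c i \<le> c i * mid i + exp 1 * (c i * exp (- (real i / A * x1))) + 2 * (c i - c i * exp (- (real i / A * x2)))" for i
  proof -
    define s where "s = real i / A"
    define a1 where "a1 = exp (- (s * x1))"
    define a2 where "a2 = exp (- (s * x2))"
    have s0: "s \<ge> 0" using A0 by (simp add: s_def)
    have ex1: "a1 \<le> 1" "a2 \<le> 1" "a1 \<ge> 0" using s0 x1 x2 by (auto simp: a1_def a2_def)
    have mid01: "mid i \<ge> 0" by (simp add: mid_def)
    have "1 \<le> mid i + exp 1 * a1 + 2 * (1 - a2)"
    proof (cases "s < \<epsilon>")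
      case True
      then have "s * x1 < 1" using x1 by (simp add: \<epsilon>_def field_simps)
      then have "exp (- (s * x1)) \<ge> exp (-1)" by simp
      then have "exp 1 * a1 \<ge> 1" unfolding a1_def by (simp add: exp_minus field_simps)
      moreover have "2 * (1 - a2) \<ge> 0" using ex1 by simp
      ultimately show ?thesis using mid01 by linarith
    next
      case F1: False
      show ?thesis
      proof (cases "s > S")
        case True
        then have "s * x2 > 1" using x2 by (simp add: S_def field_simps)
        then have "a2 \<le> exp (-1)" unfolding a2_def by simp
        also have "exp (-1::real) \<le> 1/2" using exp_ge_add_one_self[of 1] by (simp add: exp_minus field_simps)
        finally have "2 * (1 - a2) \<ge> 1" by simp
        moreover have "exp 1 * a1 \<ge> 0" using ex1 by simp
        ultimately show ?thesis using mid01 by linarith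
      next
        case False
        then have "mid i = 1" using F1 by (simp add: mid_def s_def)
        moreover have "exp 1 * a1 \<ge> 0" using ex1 by simp
        moreover have "2 * (1 - a2) \<ge> 0" using ex1 by simp
        ultimately show ?thesis by linarith
      qed
    qed
    from mult_left_mono[OF this c0[of i]] show ?thesis by (simp add: algebra_simps a1_def a2_def s_def)
  qed
  have x1P: "x1 \<in> P" and x2P: "x2 \<in> P" by (auto simp: P_def)
  have "m \<le> Mid + exp 1 * E x1 + 2 * (m - E x2)"
  proof -
    have "m \<le> (\<Sum>i<n. c i * mid i + exp 1 * (c i * exp (- (real i / A * x1))) + 2 * (c i - c i * exp (- (real i / A * x2))))"
      unfolding m_def by (rule sum_mono[OF perI])
    also have "\<dots> = Mid + exp 1 * E x1 + 2 * (m - E x2)"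
      by (simp add: Mid_def E_def m_def sum.distrib sum_distrib_left sum_subtractf)
    finally show ?thesis .
  qed
  moreover have "E x1 \<le> 1/20 + 1/40"
  proof -
    have "E x1 \<le> Tp \<phi> A n x1 + x1 / A" using ET[of x1] PA x1P by fastforce
    moreover have "Tp \<phi> A n x1 \<le> \<phi> x1" using Tle PA x1P by fastforce
    moreover have "x1 / A \<le> 1/40" using PA x1P UA(2) by (meson order_trans)
    ultimately show ?thesis using x1 by linarith
  qed
  moreover have "E x2 \<ge> 19/20 - 1/40"
    using ET[of x2] PA x2P Tge[OF x2P] x2 by (fastforce simp: \<eta>'_def)
  moreover have "exp 1 * E x1 \<le> 3 * (1/20 + 1/40)"
  proof -
    have "E x1 \<ge> 0" unfolding E_def using c0 by (auto intro!: sum_nonneg)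
    then show ?thesis using e3 \<open>E x1 \<le> 1/20 + 1/40\<close> by (intro mult_mono) auto
  qed
  ultimately have "Mid \<ge> 1/2" using m1 arith_helper by blast
  then have "\<delta> * Mid \<ge> \<delta> * (1/2)" using \<delta>(1) by (intro mult_left_mono) auto
  then have "G \<ge> \<delta> / 2" using Gmid by linarith
  then show ?thesis using LG \<delta> by linarith
qed



primrec cf :: "real \<Rightarrow> real \<Rightarrow> nat \<Rightarrow> nat \<Rightarrow> real" where
  "cf s p 0 k = (if k = 0 then 1 else 0)"
| "cf s p (Suc n) k = (if k = 0 then 0 else cf s p n (k - 1) * (s * p)) + cf s p n k * (real n - real k * p)"

lemma cf_zero: "k > n \<Longrightarrow> cf s p n k = 0"
  by (induction n arbitrary: k) auto

lemma cf_nonneg: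
  assumes "s > 0" "0 < p" "p \<le> 1"
  shows "cf s p n k \<ge> 0"
proof (induction n arbitrary: k)
  case 0 then show ?case by simp
next
  case (Suc n)
  have a: "(if k = 0 then 0 else cf s p n (k - 1) * (s * p)) \<ge> 0"
    using Suc.IH[of "k-1"] assms by auto
  have b: "cf s p n k * (real n - real k * p) \<ge> 0"
  proof (cases "k \<le> n")
    case True
    have "real k * p \<le> real k" using assms by (simp add: mult_left_le)
    then have "real n - real k * p \<ge> 0" using True by linarith
    then show ?thesis using Suc.IH[of k] by simp
  next
    case False then show ?thesis using cf_zero[of n k] by simp
  qed
  show ?case using a b by simp
qed

definition Fd :: "real \<Rightarrow> real \<Rightarrow> nat \<Rightarrow> real \<Rightarrow> real" where
  "Fd s p n u = (-1)^n * exp (- s * u powr p) * (\<Sum>k\<le>n. cf s p n k * u powr (real k * p - real n))"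

lemma Fd_deriv:
  assumes u: "u > 0"
  shows "(Fd s p n has_real_derivative Fd s p (Suc n) u) (at u)"
proof -
  define E where "E = exp (- s * u powr p)"
  define D where "D = (-1)^n * (E * (- s * (p * u powr (p - 1))) * (\<Sum>k\<le>n. cf s p n k * u powr (real k * p - real n))
      + E * (\<Sum>k\<le>n. cf s p n k * ((real k * p - real n) * u powr (real k * p - real n - 1))))"
  have d: "(Fd s p n has_real_derivative D) (at u)"
    unfolding Fd_def[abs_def] D_def E_def using u
    by (auto intro!: derivative_eq_intros simp: algebra_simps)
  have pw: "u powr (p - 1) * u powr (real k * p - real n) = u powr (real (Suc k) * p - real (Suc n))" for k
    using u by (simp add: powr_add[symmetric] algebra_simps)
  have pw2: "u powr (real k * p - real n - 1) = u powr (real k * p - real (Suc n))" for k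
    by (simp add: algebra_simps)
  have S1: "(\<Sum>k\<le>Suc n. (if k = 0 then 0 else cf s p n (k - 1) * (s * p)) * u powr (real k * p - real (Suc n)))
      = (\<Sum>k\<le>n. cf s p n k * (s * p) * (u powr (p - 1) * u powr (real k * p - real n)))"
    by (subst sum.atMost_Suc_shift) (simp add: pw)
  have S2: "(\<Sum>k\<le>Suc n. cf s p n k * (real n - real k * p) * u powr (real k * p - real (Suc n)))
      = (\<Sum>k\<le>n. cf s p n k * (real n - real k * p) * u powr (real k * p - real n - 1))"
    by (simp add: cf_zero pw2)
  have "Fd s p (Suc n) u = (-1)^Suc n * E * ((\<Sum>k\<le>Suc n. (if k = 0 then 0 else cf s p n (k - 1) * (s * p)) * u powr (real k * p - real (Suc n)))
      + (\<Sum>k\<le>Suc n. cf s p n k * (real n - real k * p) * u powr (real k * p - real (Suc n))))"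
    by (simp add: Fd_def E_def sum.distrib distrib_right)
  also have "\<dots> = D"
    unfolding S1 S2 D_def
    by (simp add: sum_distrib_left sum_distrib_right sum_negf[symmetric] algebra_simps)
  finally show ?thesis using d by simp
qed



lemma deriv_iter_Fd:
  "u > 0 \<Longrightarrow> (deriv ^^ n) (\<lambda>u. exp (- s * u powr p)) u = Fd s p n u"
proof (induction n arbitrary: u)
  case 0 then show ?case by (simp add: Fd_def)
next
  case (Suc n)
  have "((deriv ^^ n) (\<lambda>u. exp (- s * u powr p)) has_real_derivative Fd s p (Suc n) u) (at u)"
    by (rule has_field_derivative_transform_within_open[OF Fd_deriv[OF Suc.prems], of "{0<..}"])
       (use Suc in auto)
  then show ?case by (simp add: DERIV_imp_deriv)
qed

lemma cm_exp_powr: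
  assumes "s > 0" "0 < p" "p \<le> 1"
  shows "completely_monotone (\<lambda>u. exp (- s * u powr p))"
  unfolding completely_monotone_def
proof (intro conjI allI impI)
  fix n :: nat and x :: real assume x: "x > 0"
  have "((deriv ^^ n) (\<lambda>u. exp (- s * u powr p)) has_real_derivative Fd s p (Suc n) x) (at x)"
    by (rule has_field_derivative_transform_within_open[OF Fd_deriv[OF x], of "{0<..}"])
       (use x deriv_iter_Fd in auto)
  then show "(deriv ^^ n) (\<lambda>u. exp (- s * u powr p)) differentiable at x"
    using real_differentiable_def by blast
next
  fix n :: nat and x :: real assume x: "x > 0"
  have "(-1)^n * (deriv ^^ n) (\<lambda>u. exp (- s * u powr p)) x
       = exp (- s * x powr p) * (\<Sum>k\<le>n. cf s p n k * x powr (real k * p - real n))"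
    using deriv_iter_Fd[OF x] by (simp add: Fd_def power_mult_distrib[symmetric])
  also have "\<dots> \<ge> 0" using cf_nonneg[OF assms] by (intro mult_nonneg_nonneg sum_nonneg) auto
  finally show "(-1)^n * (deriv ^^ n) (\<lambda>u. exp (- s * u powr p)) x \<ge> 0" .
next
  have "((\<lambda>u. u powr p) \<longlongrightarrow> 0) (at_right 0)"
    by (rule tendsto_zero_powrI[where b=p]) (use assms in \<open>auto intro!: tendsto_intros eventually_at_rightI[of 0 1]\<close>)
  then have "((\<lambda>u. exp (- s * u powr p)) \<longlongrightarrow> exp (- s * 0)) (at_right 0)"
    by (intro tendsto_intros)
  then show "((\<lambda>u. exp (- s * u powr p)) \<longlongrightarrow> exp (- s * 0 powr p)) (at_right 0)" by simp
qed



lemma weights_exist: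
  fixes T :: "real set" and h :: "real \<Rightarrow> real"
  assumes "finite T" and mono: "\<And>x y. x < y \<Longrightarrow> h x < h y" and hpos: "\<And>x. h x > 0"
  shows "\<exists>w. (\<forall>\<tau>\<in>T. w \<tau> > 0) \<and> (\<forall>x\<in>T. (\<Sum>\<tau>\<in>{\<tau>\<in>T. \<tau> \<le> x}. w \<tau>) = h x)"
  using assms(1)
proof (induction T rule: finite_linorder_max_induct)
  case empty then show ?case by simp
next
  case (insert b A)
  then obtain w where w: "\<forall>\<tau>\<in>A. w \<tau> > 0" "\<forall>x\<in>A. (\<Sum>\<tau>\<in>{\<tau>\<in>A. \<tau> \<le> x}. w \<tau>) = h x" by blast
  have bA: "b \<notin> A" using insert.hyps(2) by auto
  define w' where "w' = w(b := h b - (if A = {} then 0 else h (Max A)))"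
  have pos: "\<forall>\<tau>\<in>insert b A. w' \<tau> > 0"
  proof
    fix \<tau> assume "\<tau> \<in> insert b A"
    then show "w' \<tau> > 0"
    proof
      assume "\<tau> = b"
      show ?thesis
      proof (cases "A = {}")
        case True then show ?thesis using hpos \<open>\<tau> = b\<close> by (simp add: w'_def)
      next
        case False
        then have "Max A < b" using insert.hyps(1,2) by simp
        then show ?thesis using mono[of "Max A" b] \<open>\<tau> = b\<close> False by (simp add: w'_def)
      qed
    next
      assume "\<tau> \<in> A" then show ?thesis using w(1) bA by (auto simp: w'_def)
    qed
  qed
  have sums: "\<forall>x\<in>insert b A. (\<Sum>\<tau>\<in>{\<tau>\<in>insert b A. \<tau> \<le> x}. w' \<tau>) = h x"
  proof
    fix x assume "x \<in> insert b A"
    then show "(\<Sum>\<tau>\<in>{\<tau>\<in>insert b A. \<tau> \<le> x}. w' \<tau>) = h x"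
    proof
      assume xb: "x = b"
      have eq: "{\<tau>\<in>insert b A. \<tau> \<le> x} = insert b A" using insert.hyps(2) xb by auto
      have "(\<Sum>\<tau>\<in>insert b A. w' \<tau>) = w' b + (\<Sum>\<tau>\<in>A. w' \<tau>)" using insert.hyps(1) bA by simp
      also have "(\<Sum>\<tau>\<in>A. w' \<tau>) = (\<Sum>\<tau>\<in>A. w \<tau>)" using bA by (intro sum.cong) (auto simp: w'_def)
      also have "(\<Sum>\<tau>\<in>A. w \<tau>) = (if A = {} then 0 else h (Max A))"
      proof (cases "A = {}")
        case False
        have "{\<tau>\<in>A. \<tau> \<le> Max A} = A" using insert.hyps(1) by auto
        then show ?thesis using w(2) False insert.hyps(1) by (metis Max_in)
      qed simp
      finally show ?thesis using eq xb by (simp add: w'_def)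
    next
      assume xA: "x \<in> A"
      have eq: "{\<tau>\<in>insert b A. \<tau> \<le> x} = {\<tau>\<in>A. \<tau> \<le> x}" using insert.hyps(2) xA by force
      have "(\<Sum>\<tau>\<in>{\<tau>\<in>A. \<tau> \<le> x}. w' \<tau>) = (\<Sum>\<tau>\<in>{\<tau>\<in>A. \<tau> \<le> x}. w \<tau>)"
        using bA by (intro sum.cong) (auto simp: w'_def)
      then show ?thesis using eq w(2) xA by simp
    qed
  qed
  show ?case using pos sums by blast
qed

lemma exp_abs_repr:
  fixes r s t :: real
  shows "exp (- r * \<bar>t - s\<bar>) = exp (- r * s) * exp (- r * t) * exp (2 * r * min s t)"
  by (simp add: exp_add[symmetric] min_def algebra_simps abs_if)



definition Qr :: "nat \<Rightarrow> (nat \<Rightarrow> complex) \<Rightarrow> (nat \<Rightarrow> nat \<Rightarrow> real) \<Rightarrow> real" where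
  "Qr k c K = (\<Sum>l<k. \<Sum>l'<k. Re (cnj (c l) * c l') * K l l')"

lemma quad_real_sq:
  fixes \<beta> :: "nat \<Rightarrow> real"
  shows "(\<Sum>l<k. \<Sum>l'<k. Re (cnj (c l) * c l') * (\<beta> l * \<beta> l')) = (cmod (\<Sum>l<k. of_real (\<beta> l) * c l))^2"
proof -
  define S where "S = (\<Sum>l<k. of_real (\<beta> l) * c l)"
  have "complex_of_real ((cmod S)^2) = cnj S * S" by (metis complex_norm_square mult.commute)
  also have "\<dots> = (\<Sum>l<k. \<Sum>l'<k. cnj (of_real (\<beta> l) * c l) * (of_real (\<beta> l') * c l'))"
    unfolding S_def by (simp add: sum_product cnj_sum)
  finally have "(cmod S)^2 = Re (\<Sum>l<k. \<Sum>l'<k. cnj (of_real (\<beta> l) * c l) * (of_real (\<beta> l') * c l'))"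
    by (metis Re_complex_of_real)
  also have "\<dots> = (\<Sum>l<k. \<Sum>l'<k. Re (cnj (c l) * c l') * (\<beta> l * \<beta> l'))"
    by (simp add: Re_sum algebra_simps)
  finally show ?thesis by (simp add: S_def)
qed

lemma base_pd:
  fixes \<theta> :: "nat \<Rightarrow> real^'D" and r :: "'D \<Rightarrow> real" and c :: "nat \<Rightarrow> complex"
  assumes rpos: "\<forall>d. r d > 0" and inj: "inj_on \<theta> {..<k}" and cnz: "\<exists>l<k. c l \<noteq> 0"
  shows "Qr k c (\<lambda>l l'. \<Prod>d\<in>UNIV. exp (- r d * \<bar>\<theta> l' $ d - \<theta> l $ d\<bar>)) > 0"
proof -
  define T where "T d = (\<lambda>l. \<theta> l $ d) ` {..<k}" for d
  have finT: "finite (T d)" for d by (simp add: T_def)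
  have "\<forall>d. \<exists>w. (\<forall>\<tau>\<in>T d. w \<tau> > 0) \<and> (\<forall>x\<in>T d. (\<Sum>\<tau>\<in>{\<tau>\<in>T d. \<tau> \<le> x}. w \<tau>) = exp (2 * r d * x))"
  proof
    fix d
    show "\<exists>w. (\<forall>\<tau>\<in>T d. w \<tau> > 0) \<and> (\<forall>x\<in>T d. (\<Sum>\<tau>\<in>{\<tau>\<in>T d. \<tau> \<le> x}. w \<tau>) = exp (2 * r d * x))"
      by (rule weights_exist[OF finT]) (use rpos in auto)
  qed
  then obtain w where wpos: "\<And>d \<tau>. \<tau> \<in> T d \<Longrightarrow> w d \<tau> > 0"
    and wsum: "\<And>d x. x \<in> T d \<Longrightarrow> (\<Sum>\<tau>\<in>{\<tau>\<in>T d. \<tau> \<le> x}. w d \<tau>) = exp (2 * r d * x)"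
    by metis
  define I where "I (P::bool) = (if P then 1 else 0 :: real)" for P
  have one_d: "exp (- r d * \<bar>t - s\<bar>) = exp (- r d * s) * exp (- r d * t) * (\<Sum>\<tau>\<in>T d. w d \<tau> * I (\<tau> \<le> s) * I (\<tau> \<le> t))"
    if "s \<in> T d" "t \<in> T d" for d s t
  proof -
    have m: "min s t \<in> T d" using that by (simp add: min_def)
    have "(\<Sum>\<tau>\<in>T d. w d \<tau> * I (\<tau> \<le> s) * I (\<tau> \<le> t)) = (\<Sum>\<tau>\<in>{\<tau>\<in>T d. \<tau> \<le> min s t}. w d \<tau>)"
    proof -
      have "(\<Sum>\<tau>\<in>T d. w d \<tau> * I (\<tau> \<le> s) * I (\<tau> \<le> t)) = (\<Sum>\<tau>\<in>T d. if \<tau> \<le> min s t then w d \<tau> else 0)"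
        by (intro sum.cong) (auto simp: I_def)
      also have "\<dots> = (\<Sum>\<tau>\<in>{\<tau>\<in>T d. \<tau> \<le> min s t}. w d \<tau>)"
        by (rule sum.inter_filter[OF finT, symmetric])
      finally show ?thesis .
    qed
    also have "\<dots> = exp (2 * r d * min s t)" using wsum[OF m] .
    finally show ?thesis using exp_abs_repr[of "r d" t s] by simp
  qed
  define \<alpha> where "\<alpha> l = (\<Prod>d\<in>UNIV. exp (- r d * (\<theta> l $ d)))" for l
  define W where "W g = (\<Prod>d\<in>UNIV. w d (g d))" for g
  define J where "J g l = (\<Prod>d\<in>UNIV. I (g d \<le> \<theta> l $ d))" for g l
  define G where "G = PiE UNIV T"
  have finG: "finite G" unfolding G_def by (intro finite_PiE) (auto simp: finT)
  have K: "(\<Prod>d\<in>UNIV. exp (- r d * \<bar>\<theta> l' $ d - \<theta> l $ d\<bar>)) = \<alpha> l * \<alpha> l' * (\<Sum>g\<in>G. W g * J g l * J g l')"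
    if "l < k" "l' < k" for l l'
  proof -
    have mem: "\<theta> l $ d \<in> T d" "\<theta> l' $ d \<in> T d" for d using that by (auto simp: T_def)
    have "(\<Prod>d\<in>UNIV. exp (- r d * \<bar>\<theta> l' $ d - \<theta> l $ d\<bar>))
        = (\<Prod>d\<in>UNIV. exp (- r d * (\<theta> l $ d)) * exp (- r d * (\<theta> l' $ d)) * (\<Sum>\<tau>\<in>T d. w d \<tau> * I (\<tau> \<le> \<theta> l $ d) * I (\<tau> \<le> \<theta> l' $ d)))"
      using one_d[OF mem(1) mem(2)] by simp
    also have "\<dots> = \<alpha> l * \<alpha> l' * (\<Prod>d\<in>UNIV. \<Sum>\<tau>\<in>T d. w d \<tau> * I (\<tau> \<le> \<theta> l $ d) * I (\<tau> \<le> \<theta> l' $ d))"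
      by (simp add: \<alpha>_def prod.distrib)
    also have "(\<Prod>d\<in>UNIV. \<Sum>\<tau>\<in>T d. w d \<tau> * I (\<tau> \<le> \<theta> l $ d) * I (\<tau> \<le> \<theta> l' $ d))
        = (\<Sum>g\<in>G. \<Prod>d\<in>UNIV. w d (g d) * I (g d \<le> \<theta> l $ d) * I (g d \<le> \<theta> l' $ d))"
      unfolding G_def by (rule prod_sum_PiE) (auto simp: finT)
    also have "\<dots> = (\<Sum>g\<in>G. W g * J g l * J g l')"
      by (simp add: W_def J_def prod.distrib)
    finally show ?thesis .
  qed
  have "Qr k c (\<lambda>l l'. \<Prod>d\<in>UNIV. exp (- r d * \<bar>\<theta> l' $ d - \<theta> l $ d\<bar>))
      = (\<Sum>l<k. \<Sum>l'<k. Re (cnj (c l) * c l') * (\<alpha> l * \<alpha> l' * (\<Sum>g\<in>G. W g * J g l * J g l')))"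
    unfolding Qr_def using K by (intro sum.cong refl) auto
  also have "\<dots> = (\<Sum>g\<in>G. W g * (\<Sum>l<k. \<Sum>l'<k. Re (cnj (c l) * c l') * ((\<alpha> l * J g l) * (\<alpha> l' * J g l'))))"
    by (simp add: sum_distrib_left sum_distrib_right sum.swap[of _ G] mult_ac)
  also have "\<dots> = (\<Sum>g\<in>G. W g * (cmod (\<Sum>l<k. of_real (\<alpha> l * J g l) * c l))^2)"
    by (intro sum.cong refl arg_cong2[where f="(*)"] quad_real_sq)
  finally have Qeq: "Qr k c (\<lambda>l l'. \<Prod>d\<in>UNIV. exp (- r d * \<bar>\<theta> l' $ d - \<theta> l $ d\<bar>))
      = (\<Sum>g\<in>G. W g * (cmod (\<Sum>l<k. of_real (\<alpha> l * J g l) * c l))^2)" .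
  have Wpos: "W g > 0" if "g \<in> G" for g
    unfolding W_def using that wpos by (intro prod_pos) (auto simp: G_def PiE_def Pi_def)
  define L where "L = {l. l < k \<and> c l \<noteq> 0}"
  define \<sigma> where "\<sigma> l = (\<Sum>d\<in>UNIV. \<theta> l $ d)" for l
  have finL: "finite L" "L \<noteq> {}" using cnz by (auto simp: L_def)
  obtain l0 where l0: "l0 \<in> L" "\<And>l. l \<in> L \<Longrightarrow> \<sigma> l \<le> \<sigma> l0"
    using Max_in[OF finite_imageI[OF finL(1)], of \<sigma>] Max_ge[OF finite_imageI[OF finL(1)], of _ \<sigma>] finL(2)
    by (metis (no_types, lifting) image_iff image_is_empty)
  define g0 where "g0 d = \<theta> l0 $ d" for d
  have g0G: "g0 \<in> G" using l0(1) by (auto simp: G_def g0_def T_def L_def)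
  have J0: "J g0 l0 = 1" by (simp add: J_def I_def g0_def)
  have Jz: "J g0 l * c l = 0" if "l < k" "l \<noteq> l0" for l
  proof (cases "c l = 0")
    case False
    then have lL: "l \<in> L" using that by (simp add: L_def)
    have "\<not> (\<forall>d. \<theta> l0 $ d \<le> \<theta> l $ d)"
    proof
      assume le: "\<forall>d. \<theta> l0 $ d \<le> \<theta> l $ d"
      have "\<theta> l \<noteq> \<theta> l0" using inj that l0(1) by (auto simp: L_def inj_on_def)
      then obtain d where "\<theta> l0 $ d \<noteq> \<theta> l $ d" by (metis vec_eq_iff)
      then have "\<theta> l0 $ d < \<theta> l $ d" using le by (simp add: order.not_eq_order_implies_strict)
      then have "\<sigma> l0 < \<sigma> l" unfolding \<sigma>_def using le
        by (intro sum_strict_mono_ex1) auto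
      then show False using l0(2)[OF lL] by simp
    qed
    then have "\<exists>d. I (g0 d \<le> \<theta> l $ d) = 0" by (auto simp: I_def g0_def)
    then have "J g0 l = 0" unfolding J_def by (simp add: prod_zero_iff)
    then show ?thesis by simp
  qed simp
  have l0k: "l0 < k" using l0(1) by (simp add: L_def)
  have S0: "(\<Sum>l<k. of_real (\<alpha> l * J g0 l) * c l) = of_real (\<alpha> l0) * c l0"
  proof -
    have "(\<Sum>l<k. of_real (\<alpha> l * J g0 l) * c l) = (\<Sum>l<k. of_real (\<alpha> l) * of_real (J g0 l) * c l)" by simp
    also have "\<dots> = (\<Sum>l\<in>{l0}. of_real (\<alpha> l) * of_real (J g0 l) * c l)"
    proof (rule sum.mono_neutral_right)
      show "\<forall>i\<in>{..<k} - {l0}. complex_of_real (\<alpha> i) * complex_of_real (J g0 i) * c i = 0"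
      proof
        fix i assume "i \<in> {..<k} - {l0}"
        then have "J g0 i * c i = 0" using Jz by auto
        then have "complex_of_real (J g0 i) * c i = 0" by (metis mult_eq_0_iff of_real_eq_0_iff)
        then show "complex_of_real (\<alpha> i) * complex_of_real (J g0 i) * c i = 0" by (simp add: mult.assoc)
      qed
    qed (use l0k in auto)
    also have "\<dots> = of_real (\<alpha> l0) * c l0" using J0 by simp
    finally show ?thesis .
  qed
  have \<alpha>pos: "\<alpha> l0 > 0" unfolding \<alpha>_def by (intro prod_pos) auto
  have "0 < W g0 * (cmod (\<Sum>l<k. of_real (\<alpha> l * J g0 l) * c l))^2"
    unfolding S0 using Wpos[OF g0G] \<alpha>pos l0(1) by (simp add: L_def norm_mult)
  also have "\<dots> \<le> (\<Sum>g\<in>G. W g * (cmod (\<Sum>l<k. of_real (\<alpha> l * J g l) * c l))^2)"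
    by (rule member_le_sum[OF g0G _ finG]) (use Wpos in \<open>auto intro!: mult_nonneg_nonneg intro: less_imp_le\<close>)
  finally show ?thesis using Qeq by simp
qed



lemma powr_at_top':
  assumes "(p::real) > 0"
  shows   "filterlim (\<lambda>x. x powr p) at_top at_top"
proof (subst filterlim_cong[OF refl refl])
  show "LIM x at_top. exp (p * ln x) :> at_top"
    by (rule filterlim_compose[OF exp_at_top filterlim_tendsto_pos_mult_at_top[OF tendsto_const]])
       (simp_all add: ln_at_top assms)
  show "eventually (\<lambda>x. x powr p = exp (p * ln x)) at_top"
    using eventually_gt_at_top[of 0] by eventually_elim (simp add: powr_def)
qed

lemma exp_powr_lim:
  fixes s p :: real
  assumes "s > 0" "p > 0"
  shows "((\<lambda>u. exp (- s * u powr p)) \<longlongrightarrow> 0) at_top"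
proof -
  have "LIM u at_top. (- s) * u powr p :> at_bot"
    using filterlim_tendsto_neg_mult_at_bot[of "\<lambda>_. -s" "-s" at_top "\<lambda>u. u powr p"] assms powr_at_top'[of p] by simp
  then show ?thesis by (rule filterlim_compose[OF exp_at_bot])
qed

lemma Qr_prod:
  "Qr k c K = (\<Sum>z\<in>{..<k}\<times>{..<k}. Re (cnj (c (fst z)) * c (snd z)) * K (fst z) (snd z))"
  unfolding Qr_def by (simp add: sum.cartesian_product case_prod_beta)

lemma coord_induct:
  fixes \<theta> :: "nat \<Rightarrow> real^'D" and c :: "nat \<Rightarrow> complex"
  assumes sp: "s > 0" "0 < p" "p \<le> 1" and inj: "inj_on \<theta> {..<k}" and cnz: "\<exists>l<k. c l \<noteq> 0"
  shows "finite S \<Longrightarrow> \<forall>r. (\<forall>d. r d > 0) \<longrightarrow>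
     Qr k c (\<lambda>l l'. \<Prod>d\<in>UNIV. (if d \<in> S then exp (- s * \<bar>\<theta> l' $ d - \<theta> l $ d\<bar> powr p)
                                else exp (- r d * \<bar>\<theta> l' $ d - \<theta> l $ d\<bar>))) > 0"
proof (induction S rule: finite_induct)
  case empty
  show ?case using base_pd[OF _ inj cnz] by simp
next
  case (insert d0 S)
  show ?case
  proof (intro allI impI)
    fix r :: "'D \<Rightarrow> real" assume rpos: "\<forall>d. r d > 0"
    define F where "F S' r' l l' d = (if d \<in> S' then exp (- s * \<bar>\<theta> l' $ d - \<theta> l $ d\<bar> powr p)
                                else exp (- r' d * \<bar>\<theta> l' $ d - \<theta> l $ d\<bar>))" for S' r' l l' d
    define W where "W z = Re (cnj (c (fst z)) * c (snd z)) * (\<Prod>d\<in>UNIV - {d0}. F S r (fst z) (snd z) d)" for z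
    define u where "u z = \<bar>\<theta> (snd z) $ d0 - \<theta> (fst z) $ d0\<bar>" for z
    have split: "(\<Prod>d\<in>UNIV. G d) = G d0 * (\<Prod>d\<in>UNIV - {d0}. G d)" for G :: "'D \<Rightarrow> real"
      by (simp add: prod.remove)
    have hyp: "\<forall>\<rho>>0. (\<Sum>z\<in>{..<k}\<times>{..<k}. W z * exp (- \<rho> * u z)) > 0"
    proof (intro allI impI)
      fix \<rho> :: real assume \<rho>: "\<rho> > 0"
      have r'pos: "\<forall>d. (r(d0 := \<rho>)) d > 0" using rpos \<rho> by auto
      have "Qr k c (\<lambda>l l'. \<Prod>d\<in>UNIV. F S (r(d0 := \<rho>)) l l' d) > 0"
        using insert.IH r'pos unfolding F_def by blast
      also have "Qr k c (\<lambda>l l'. \<Prod>d\<in>UNIV. F S (r(d0 := \<rho>)) l l' d) = (\<Sum>z\<in>{..<k}\<times>{..<k}. W z * exp (- \<rho> * u z))"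
        unfolding Qr_prod
      proof (intro sum.cong refl)
        fix z
        have "(\<Prod>d\<in>UNIV. F S (r(d0 := \<rho>)) (fst z) (snd z) d)
            = F S (r(d0 := \<rho>)) (fst z) (snd z) d0 * (\<Prod>d\<in>UNIV - {d0}. F S (r(d0 := \<rho>)) (fst z) (snd z) d)"
          by (rule split)
        also have "(\<Prod>d\<in>UNIV - {d0}. F S (r(d0 := \<rho>)) (fst z) (snd z) d) = (\<Prod>d\<in>UNIV - {d0}. F S r (fst z) (snd z) d)"
          by (intro prod.cong refl) (auto simp: F_def)
        also have "F S (r(d0 := \<rho>)) (fst z) (snd z) d0 = exp (- \<rho> * u z)"
          using insert.hyps(2) by (simp add: F_def u_def)
        finally have eqn: "(\<Prod>d\<in>UNIV. F S (r(d0 := \<rho>)) (fst z) (snd z) d) = exp (- \<rho> * u z) * (\<Prod>d\<in>UNIV - {d0}. F S r (fst z) (snd z) d)" .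
        show "Re (cnj (c (fst z)) * c (snd z)) * (\<Prod>d\<in>UNIV. F S (r(d0 := \<rho>)) (fst z) (snd z) d) = W z * exp (- \<rho> * u z)"
          unfolding eqn W_def by (simp only: mult_ac)
      qed
      finally show "(\<Sum>z\<in>{..<k}\<times>{..<k}. W z * exp (- \<rho> * u z)) > 0" .
    qed
    have T: "(\<Sum>z\<in>{..<k}\<times>{..<k}. W z * exp (- s * u z powr p)) > 0"
      by (rule transfer[OF cm_exp_powr[OF sp] _ exp_powr_lim[OF sp(1,2)] _ _ hyp]) (use sp in \<open>auto simp: u_def\<close>)
    also have "(\<Sum>z\<in>{..<k}\<times>{..<k}. W z * exp (- s * u z powr p)) = Qr k c (\<lambda>l l'. \<Prod>d\<in>UNIV. F (insert d0 S) r l l' d)"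
      unfolding Qr_prod
    proof (intro sum.cong refl)
      fix z
      have "(\<Prod>d\<in>UNIV. F (insert d0 S) r (fst z) (snd z) d)
          = F (insert d0 S) r (fst z) (snd z) d0 * (\<Prod>d\<in>UNIV - {d0}. F (insert d0 S) r (fst z) (snd z) d)"
        by (rule split)
      also have "(\<Prod>d\<in>UNIV - {d0}. F (insert d0 S) r (fst z) (snd z) d) = (\<Prod>d\<in>UNIV - {d0}. F S r (fst z) (snd z) d)"
        by (intro prod.cong refl) (auto simp: F_def)
      also have "F (insert d0 S) r (fst z) (snd z) d0 = exp (- s * u z powr p)"
        by (simp add: F_def u_def)
      finally have eqn: "(\<Prod>d\<in>UNIV. F (insert d0 S) r (fst z) (snd z) d) = exp (- s * u z powr p) * (\<Prod>d\<in>UNIV - {d0}. F S r (fst z) (snd z) d)" .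
      show "W z * exp (- s * u z powr p) = Re (cnj (c (fst z)) * c (snd z)) * (\<Prod>d\<in>UNIV. F (insert d0 S) r (fst z) (snd z) d)"
        unfolding eqn W_def by (simp only: mult_ac)
    qed
    finally show "Qr k c (\<lambda>l l'. \<Prod>d\<in>UNIV. (if d \<in> insert d0 S then exp (- s * \<bar>\<theta> l' $ d - \<theta> l $ d\<bar> powr p)
                                else exp (- r d * \<bar>\<theta> l' $ d - \<theta> l $ d\<bar>))) > 0"
      unfolding F_def .
  qed
qed



lemma herm_real:
  fixes K :: "nat \<Rightarrow> nat \<Rightarrow> real"
  assumes sym: "\<And>l l'. K l l' = K l' l"
  shows "(\<Sum>l<k. \<Sum>l'<k. cnj (c l) * c l' * complex_of_real (K l l')) = complex_of_real (Qr k c K)"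
proof -
  define X where "X = (\<Sum>l<k. \<Sum>l'<k. Im (cnj (c l) * c l') * K l l')"
  have e1: "(\<Sum>l<k. \<Sum>l'<k. Im (cnj (c l) * c l') * K l l') = (\<Sum>l'<k. \<Sum>l<k. Im (cnj (c l) * c l') * K l l')"
    by (rule sum.swap)
  have e2: "(\<Sum>l'<k. \<Sum>l<k. Im (cnj (c l) * c l') * K l l') = (\<Sum>l'<k. \<Sum>l<k. - (Im (cnj (c l') * c l) * K l' l))"
    by (intro sum.cong refl) (simp add: sym algebra_simps)
  have X0: "X = 0" using e1 e2 unfolding X_def by (simp add: sum_negf)
  have Re: "Re (\<Sum>l<k. \<Sum>l'<k. cnj (c l) * c l' * complex_of_real (K l l')) = Qr k c K"
    by (simp add: Qr_def Re_sum)
  have Im: "Im (\<Sum>l<k. \<Sum>l'<k. cnj (c l) * c l' * complex_of_real (K l l')) = X"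
    by (simp add: X_def Im_sum)
  show ?thesis using Re Im X0 by (simp add: complex_eq_iff)
qed

theorem mainTheorem4:
  fixes \<phi> :: "real \<Rightarrow> real" and p :: real and k :: nat
    and \<theta> :: "nat \<Rightarrow> real ^ 'D" and c :: "nat \<Rightarrow> complex"
  assumes "completely_monotone \<phi>"
    and "\<phi> 0 = 1"
    and "(\<phi> \<longlongrightarrow> 0) at_top"
    and "0 < p" and "p \<le> 1"
    and "k \<ge> 1"
    and "inj_on \<theta> {..<k}"
    and "\<exists>l<k. c l \<noteq> 0"
  shows "(\<Sum>l<k. \<Sum>l'<k. cnj (c l) * c l' * complex_of_real (\<phi> (pnorm_pow p (\<theta> l' - \<theta> l)))) > 0"
proof -
  define u where "u z = pnorm_pow p (\<theta> (snd z) - \<theta> (fst z))" for z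
  have hyp: "\<forall>s>0. (\<Sum>z\<in>{..<k}\<times>{..<k}. Re (cnj (c (fst z)) * c (snd z)) * exp (- s * u z)) > 0"
  proof (intro allI impI)
    fix s :: real assume s: "s > 0"
    have "Qr k c (\<lambda>l l'. \<Prod>d\<in>UNIV. (if d \<in> UNIV then exp (- s * \<bar>\<theta> l' $ d - \<theta> l $ d\<bar> powr p)
                                else exp (- 1 * \<bar>\<theta> l' $ d - \<theta> l $ d\<bar>))) > 0"
      using spec[OF coord_induct[OF s assms(4,5,7,8), of UNIV], of "\<lambda>_. 1"] by simp
    also have "Qr k c (\<lambda>l l'. \<Prod>d\<in>UNIV. (if d \<in> UNIV then exp (- s * \<bar>\<theta> l' $ d - \<theta> l $ d\<bar> powr p)
                                else exp (- 1 * \<bar>\<theta> l' $ d - \<theta> l $ d\<bar>)))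
        = (\<Sum>z\<in>{..<k}\<times>{..<k}. Re (cnj (c (fst z)) * c (snd z)) * exp (- s * u z))"
      unfolding Qr_prod
    proof (intro sum.cong refl)
      fix z :: "nat \<times> nat"
      have "exp (- s * u z) = (\<Prod>d\<in>UNIV. exp (- s * \<bar>\<theta> (snd z) $ d - \<theta> (fst z) $ d\<bar> powr p))"
        by (simp add: u_def pnorm_pow_def sum_distrib_left exp_sum)
      then show "Re (cnj (c (fst z)) * c (snd z)) * (\<Prod>d\<in>UNIV. (if d \<in> UNIV then exp (- s * \<bar>\<theta> (snd z) $ d - \<theta> (fst z) $ d\<bar> powr p)
                                else exp (- 1 * \<bar>\<theta> (snd z) $ d - \<theta> (fst z) $ d\<bar>)))
          = Re (cnj (c (fst z)) * c (snd z)) * exp (- s * u z)" by simp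
    qed
    finally show "(\<Sum>z\<in>{..<k}\<times>{..<k}. Re (cnj (c (fst z)) * c (snd z)) * exp (- s * u z)) > 0" .
  qed
  have u0: "\<forall>z\<in>{..<k}\<times>{..<k}. u z \<ge> 0" by (auto simp: u_def pnorm_pow_def intro!: sum_nonneg)
  have T: "(\<Sum>z\<in>{..<k}\<times>{..<k}. Re (cnj (c (fst z)) * c (snd z)) * \<phi> (u z)) > 0"
    by (rule transfer[OF assms(1,2,3) _ u0 hyp]) simp
  have Qpos: "Qr k c (\<lambda>l l'. \<phi> (pnorm_pow p (\<theta> l' - \<theta> l))) > 0"
    using T unfolding Qr_prod u_def .
  have sym: "\<phi> (pnorm_pow p (\<theta> l' - \<theta> l)) = \<phi> (pnorm_pow p (\<theta> l - \<theta> l'))" for l l'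
  proof -
    have "pnorm_pow p (\<theta> l' - \<theta> l) = pnorm_pow p (\<theta> l - \<theta> l')"
      unfolding pnorm_pow_def by (intro sum.cong refl) (simp add: abs_minus_commute)
    then show ?thesis by simp
  qed
  show ?thesis
    unfolding herm_real[of "\<lambda>l l'. \<phi> (pnorm_pow p (\<theta> l' - \<theta> l))", OF sym]
    using Qpos by (simp add: less_complex_def)
qed


end
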